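(* Let $\varphi\in\mathcal{A}$ be w.h.i.s. and let $\vec h\in\mathcal{A}^3$. If $(\vec\nabla\times\vec h)\cdot\vec\nabla\varphi=0$, then there exist $f,g\in\mathcal{A}$ such that $\vec h=\vec\nabla f+g\vec\nabla\varphi$.
   Context: $\mathbf{F}$ is a field of characteristic zero and $\mathcal{A}=\mathbf{F}[x,y,z]$. Elements of $\mathcal{A}^3$ are treated as vector fields: $\vec f\cdot\vec g$, $\vec f\times\vec g$ are the usual inner and cross products, $\vec\nabla f=(\partial f/\partial x,\partial f/\partial y,\partial f/\partial z)$, $\vec\nabla\times$ is the curl and $\mathrm{Div}$ the divergence. Fix positive integers $\varpi_1,\varpi_2,\varpi_3$ without common divisor $>1$ (the weights of $x,y,z$). A nonzero polynomial is weight homogeneous of degree $d$ if it is an $\mathbf{F}$-linear combination of monomials $x^ay^bz^c$ with $a\varpi_1+b\varpi_2+c\varpi_3=d$; we write $\varpi(f)=d$. A polynomial $\varphi\in\mathcal{A}$ is called w.h.i.s. (weight homogeneous with an isolated singularity) if it is weight homogeneous and $\mathcal{A}_{sing}:=\mathcal{A}/\langle\partial\varphi/\partial x,\partial\varphi/\partial y,\partial\varphi/\partial z\rangle$ is a nonzero finite-dimensional $\mathbf{F}$-vector space. *)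

theory Defs
  imports "HOL-Computational_Algebra.Polynomial"
begin

text \<open>F[x,y,z] is modelled as ((F[x])[y])[z], i.e. the type 'a poly poly poly:
  the outermost variable is z, the middle one y, the innermost one x.\<close>

type_synonym 'a mpoly3 = "'a poly poly poly"

definition dX :: "'a::idom mpoly3 \<Rightarrow> 'a mpoly3" where
  "dX p = map_poly (map_poly pderiv) p"
definition dY :: "'a::idom mpoly3 \<Rightarrow> 'a mpoly3" where
  "dY p = map_poly pderiv p"
definition dZ :: "'a::idom mpoly3 \<Rightarrow> 'a mpoly3" where
  "dZ p = pderiv p"

definition coeff3 :: "'a::zero mpoly3 \<Rightarrow> nat \<Rightarrow> nat \<Rightarrow> nat \<Rightarrow> 'a" where
  "coeff3 p a b c = coeff (coeff (coeff p c) b) a"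

definition const3 :: "'a::zero \<Rightarrow> 'a mpoly3" where
  "const3 c = [:[:[:c:]:]:]"

definition weight_homogeneous ::
  "nat \<Rightarrow> nat \<Rightarrow> nat \<Rightarrow> nat \<Rightarrow> 'a::zero mpoly3 \<Rightarrow> bool" where
  "weight_homogeneous w1 w2 w3 d p \<longleftrightarrow> p \<noteq> 0 \<and>
     (\<forall>a b c. coeff3 p a b c \<noteq> 0 \<longrightarrow> a * w1 + b * w2 + c * w3 = d)"

definition jac_ideal :: "'a::idom mpoly3 \<Rightarrow> 'a mpoly3 set" where
  "jac_ideal phi = {a * dX phi + b * dY phi + c * dZ phi | a b c. True}"

text \<open>A/J is a nonzero finite-dimensional F-vector space:
  1 \<notin> J, and finitely many classes span A/J over F.\<close>
definition isolated_sing :: "'a::field mpoly3 \<Rightarrow> bool" where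
  "isolated_sing phi \<longleftrightarrow> 1 \<notin> jac_ideal phi \<and>
     (\<exists>S. finite S \<and> (\<forall>p. \<exists>k. p - (\<Sum>s\<in>S. const3 (k s) * s) \<in> jac_ideal phi))"

definition whis :: "nat \<Rightarrow> nat \<Rightarrow> nat \<Rightarrow> 'a::field mpoly3 \<Rightarrow> bool" where
  "whis w1 w2 w3 phi \<longleftrightarrow> (\<exists>d. weight_homogeneous w1 w2 w3 d phi) \<and> isolated_sing phi"

type_synonym 'a vfield = "'a mpoly3 \<times> 'a mpoly3 \<times> 'a mpoly3"

definition grad :: "'a::idom mpoly3 \<Rightarrow> 'a vfield" where
  "grad f = (dX f, dY f, dZ f)"

definition curl :: "'a::idom vfield \<Rightarrow> 'a vfield" where
  "curl h = (case h of (h1, h2, h3) \<Rightarrow>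
     (dY h3 - dZ h2, dZ h1 - dX h3, dX h2 - dY h1))"

definition vdot :: "'a::idom vfield \<Rightarrow> 'a vfield \<Rightarrow> 'a mpoly3" where
  "vdot u v = (case u of (u1, u2, u3) \<Rightarrow> case v of (v1, v2, v3) \<Rightarrow>
     u1 * v1 + u2 * v2 + u3 * v3)"

definition vadd :: "'a::idom vfield \<Rightarrow> 'a vfield \<Rightarrow> 'a vfield" where
  "vadd u v = (case u of (u1, u2, u3) \<Rightarrow> case v of (v1, v2, v3) \<Rightarrow>
     (u1 + v1, u2 + v2, u3 + v3))"

definition vscale :: "'a::idom mpoly3 \<Rightarrow> 'a vfield \<Rightarrow> 'a vfield" where
  "vscale g v = (case v of (v1, v2, v3) \<Rightarrow> (g * v1, g * v2, g * v3))"

end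

theory Submission
  imports Defs
begin



section \<open>Coefficients\<close>

lemma coeff3_ext: "(\<And>a b c. coeff3 p a b c = coeff3 q a b c) \<Longrightarrow> p = q"
  unfolding coeff3_def by (metis poly_eq_iff)

definition xp :: "nat \<Rightarrow> 'a::comm_ring_1 mpoly3" where "xp n = [:[:monom 1 n:]:]"
definition yp :: "nat \<Rightarrow> 'a::comm_ring_1 mpoly3" where "yp n = [:monom 1 n:]"
definition zp :: "nat \<Rightarrow> 'a::comm_ring_1 mpoly3" where "zp n = monom 1 n"

lemma coeff3_xp_mult: "coeff3 (xp n * p) a b c = (if a < n then 0 else coeff3 p (a-n) b c)"
  by (simp add: coeff3_def xp_def coeff_monom_mult)
lemma coeff3_yp_mult: "coeff3 (yp n * p) a b c = (if b < n then 0 else coeff3 p a (b-n) c)"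
  by (simp add: coeff3_def yp_def coeff_monom_mult)
lemma coeff3_zp_mult: "coeff3 (zp n * p) a b c = (if c < n then 0 else coeff3 p a b (c-n))"
  by (simp add: coeff3_def zp_def coeff_monom_mult)
lemma coeff3_const3_mult: "coeff3 (const3 k * p) a b c = k * coeff3 p a b c"
  by (simp add: coeff3_def const3_def)
lemma coeff3_dX: "coeff3 (dX p) a b c = of_nat (Suc a) * coeff3 p (Suc a) b c"
  by (simp add: coeff3_def dX_def coeff_map_poly coeff_pderiv)
lemma coeff3_dY: "coeff3 (dY p) a b c = of_nat (Suc b) * coeff3 p a (Suc b) c"
  by (simp add: coeff3_def dY_def coeff_map_poly coeff_pderiv of_nat_poly)
lemma coeff3_dZ: "coeff3 (dZ p) a b c = of_nat (Suc c) * coeff3 p a b (Suc c)"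
  by (simp add: coeff3_def dZ_def coeff_pderiv of_nat_poly)
lemma coeff3_add[simp]: "coeff3 (p+q) a b c = coeff3 p a b c + coeff3 q a b c"
  by (simp add: coeff3_def)
lemma coeff3_diff[simp]: "coeff3 (p-q) a b c = coeff3 p a b c - coeff3 q a b c"
  by (simp add: coeff3_def)
lemma coeff3_minus[simp]: "coeff3 (-p) a b c = - coeff3 p a b c"
  by (simp add: coeff3_def)
lemma coeff3_0[simp]: "coeff3 0 a b c = 0"
  by (simp add: coeff3_def)
lemma coeff3_sum: "coeff3 (sum f S) a b c = (\<Sum>i\<in>S. coeff3 (f i) a b c)"
  by (simp add: coeff3_def coeff_sum)
lemma coeff3_xp: "coeff3 (xp n :: 'a::comm_ring_1 mpoly3) a b c = (if a = n \<and> b = 0 \<and> c = 0 then 1 else 0)"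
  by (cases b; cases c; simp add: coeff3_def xp_def coeff_monom)
lemma coeff3_yp: "coeff3 (yp n :: 'a::comm_ring_1 mpoly3) a b c = (if a = 0 \<and> b = n \<and> c = 0 then 1 else 0)"
  by (cases a; cases c; simp add: coeff3_def yp_def coeff_monom)
lemma coeff3_zp: "coeff3 (zp n :: 'a::comm_ring_1 mpoly3) a b c = (if a = 0 \<and> b = 0 \<and> c = n then 1 else 0)"
  by (cases a; cases b; simp add: coeff3_def zp_def coeff_monom)
lemma coeff3_1: "coeff3 (1 :: 'a::comm_ring_1 mpoly3) a b c = (if a = 0 \<and> b = 0 \<and> c = 0 then 1 else 0)"
  by (cases a; cases b; cases c; simp add: coeff3_def)

lemma coeff3_const3: "coeff3 (const3 k :: 'a::comm_ring_1 mpoly3) a b c = (if a = 0 \<and> b = 0 \<and> c = 0 then k else 0)"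
  by (cases a; cases b; cases c; simp add: coeff3_def const3_def)

lemma const3_mult: "const3 (a * b) = const3 a * (const3 b :: 'a::comm_ring_1 mpoly3)"
  by (simp add: const3_def)
lemma const3_add: "const3 (a + b) = const3 a + (const3 b :: 'a::comm_ring_1 mpoly3)"
  by (simp add: const3_def)
lemma const3_1: "const3 1 = (1 :: 'a::comm_ring_1 mpoly3)"
  by (simp add: const3_def one_pCons)
lemma const3_0: "const3 0 = (0 :: 'a::comm_ring_1 mpoly3)"
  by (simp add: const3_def)
lemma const3_sum: "const3 (sum f S) = (\<Sum>i\<in>S. const3 (f i) :: 'a::comm_ring_1 mpoly3)"
  by (induction S rule: infinite_finite_induct) (auto simp: const3_0 const3_add)

section \<open>Derivations\<close>

definition deriv_op :: "('b::comm_ring_1 \<Rightarrow> 'b) \<Rightarrow> bool" where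
  "deriv_op D \<longleftrightarrow> (\<forall>a b. D (a + b) = D a + D b) \<and> (\<forall>a b. D (a * b) = D a * b + a * D b)"

lemma deriv_op_0: "deriv_op D \<Longrightarrow> D 0 = 0"
  unfolding deriv_op_def by (metis add_cancel_right_right add_0)

lemma deriv_op_sum: "deriv_op D \<Longrightarrow> D (sum f S) = (\<Sum>i\<in>S. D (f i))"
  by (induction S rule: infinite_finite_induct) (auto simp: deriv_op_0 deriv_op_def)

lemma deriv_op_map_poly:
  assumes D: "deriv_op D"
  shows "deriv_op (map_poly D)"
proof -
  have D0: "D 0 = 0" using deriv_op_0[OF D] .
  have add: "D (a + b) = D a + D b" and mul: "D (a * b) = D a * b + a * D b" for a b
    using D unfolding deriv_op_def by auto
  show ?thesis unfolding deriv_op_def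
  proof (intro conjI allI)
    fix p q :: "'a poly"
    show "map_poly D (p + q) = map_poly D p + map_poly D q"
      by (rule poly_eqI) (simp add: coeff_map_poly D0 add)
    show "map_poly D (p * q) = map_poly D p * q + p * map_poly D q"
    proof (rule poly_eqI)
      fix n
      have "coeff (map_poly D (p * q)) n = D (\<Sum>i\<le>n. coeff p i * coeff q (n - i))"
        by (simp add: coeff_map_poly D0 coeff_mult)
      also have "\<dots> = (\<Sum>i\<le>n. D (coeff p i) * coeff q (n - i) + coeff p i * D (coeff q (n - i)))"
        by (simp add: deriv_op_sum[OF D] mul)
      also have "\<dots> = coeff (map_poly D p * q + p * map_poly D q) n"
        by (simp add: coeff_mult coeff_map_poly D0 sum.distrib)
      finally show "coeff (map_poly D (p * q)) n = coeff (map_poly D p * q + p * map_poly D q) n" .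
    qed
  qed
qed

lemma deriv_op_pderiv: "deriv_op (pderiv :: 'b::idom poly \<Rightarrow> _)"
  unfolding deriv_op_def by (simp add: pderiv_add pderiv_mult algebra_simps)

lemma dX_mult: "dX (p * q) = dX p * q + p * (dX q :: 'a::idom mpoly3)"
  using deriv_op_map_poly[OF deriv_op_map_poly[OF deriv_op_pderiv]] unfolding dX_def deriv_op_def by blast
lemma dY_mult: "dY (p * q) = dY p * q + p * (dY q :: 'a::idom mpoly3)"
  using deriv_op_map_poly[OF deriv_op_pderiv] unfolding dY_def deriv_op_def by blast
lemma dZ_mult: "dZ (p * q) = dZ p * q + p * (dZ q :: 'a::idom mpoly3)"
  unfolding dZ_def by (simp add: pderiv_mult algebra_simps)

lemma dX_add: "dX (p + q) = dX p + dX (q :: 'a::idom mpoly3)"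
  by (rule coeff3_ext) (simp add: coeff3_dX algebra_simps)
lemma dY_add: "dY (p + q) = dY p + dY (q :: 'a::idom mpoly3)"
  by (rule coeff3_ext) (simp add: coeff3_dY algebra_simps)
lemma dZ_add: "dZ (p + q) = dZ p + dZ (q :: 'a::idom mpoly3)"
  by (rule coeff3_ext) (simp add: coeff3_dZ algebra_simps)
lemma dX_diff: "dX (p - q) = dX p - dX (q :: 'a::idom mpoly3)"
  by (rule coeff3_ext) (simp add: coeff3_dX algebra_simps)
lemma dY_diff: "dY (p - q) = dY p - dY (q :: 'a::idom mpoly3)"
  by (rule coeff3_ext) (simp add: coeff3_dY algebra_simps)
lemma dZ_diff: "dZ (p - q) = dZ p - dZ (q :: 'a::idom mpoly3)"
  by (rule coeff3_ext) (simp add: coeff3_dZ algebra_simps)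
lemma dX_0: "dX (0 :: 'a::idom mpoly3) = 0"
  by (rule coeff3_ext) (simp add: coeff3_dX)
lemma dY_0: "dY (0 :: 'a::idom mpoly3) = 0"
  by (rule coeff3_ext) (simp add: coeff3_dY)
lemma dZ_0: "dZ (0 :: 'a::idom mpoly3) = 0"
  by (rule coeff3_ext) (simp add: coeff3_dZ)
lemma dX_sum: "dX (sum f S) = (\<Sum>i\<in>S. dX (f i :: 'a::idom mpoly3))"
  by (rule coeff3_ext) (simp add: coeff3_dX coeff3_sum sum_distrib_left)
lemma dY_sum: "dY (sum f S) = (\<Sum>i\<in>S. dY (f i :: 'a::idom mpoly3))"
  by (rule coeff3_ext) (simp add: coeff3_dY coeff3_sum sum_distrib_left)
lemma dZ_sum: "dZ (sum f S) = (\<Sum>i\<in>S. dZ (f i :: 'a::idom mpoly3))"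
  by (rule coeff3_ext) (simp add: coeff3_dZ coeff3_sum sum_distrib_left)

lemma dYX: "dY (dX p) = dX (dY (p :: 'a::idom mpoly3))"
  by (rule coeff3_ext) (simp add: coeff3_dX coeff3_dY algebra_simps)
lemma dZX: "dZ (dX p) = dX (dZ (p :: 'a::idom mpoly3))"
  by (rule coeff3_ext) (simp add: coeff3_dX coeff3_dZ algebra_simps)
lemma dZY: "dZ (dY p) = dY (dZ (p :: 'a::idom mpoly3))"
  by (rule coeff3_ext) (simp add: coeff3_dY coeff3_dZ algebra_simps)

lemma dX_const3: "dX (const3 k :: 'a::idom mpoly3) = 0"
  by (rule coeff3_ext) (simp add: coeff3_dX coeff3_const3)
lemma dY_const3: "dY (const3 k :: 'a::idom mpoly3) = 0"
  by (rule coeff3_ext) (simp add: coeff3_dY coeff3_const3)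
lemma dZ_const3: "dZ (const3 k :: 'a::idom mpoly3) = 0"
  by (rule coeff3_ext) (simp add: coeff3_dZ coeff3_const3)

lemma dX_xp1: "dX (xp 1 :: 'a::idom mpoly3) = 1"
  by (rule coeff3_ext) (simp add: coeff3_dX coeff3_xp coeff3_1)
lemma dY_xp1: "dY (xp 1 :: 'a::idom mpoly3) = 0"
  by (rule coeff3_ext) (simp add: coeff3_dY coeff3_xp)
lemma dZ_xp1: "dZ (xp 1 :: 'a::idom mpoly3) = 0"
  by (rule coeff3_ext) (simp add: coeff3_dZ coeff3_xp)
lemma dX_yp1: "dX (yp 1 :: 'a::idom mpoly3) = 0"
  by (rule coeff3_ext) (simp add: coeff3_dX coeff3_yp)
lemma dY_yp1: "dY (yp 1 :: 'a::idom mpoly3) = 1"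
  by (rule coeff3_ext) (simp add: coeff3_dY coeff3_yp coeff3_1)
lemma dZ_yp1: "dZ (yp 1 :: 'a::idom mpoly3) = 0"
  by (rule coeff3_ext) (simp add: coeff3_dZ coeff3_yp)
lemma dX_zp1: "dX (zp 1 :: 'a::idom mpoly3) = 0"
  by (rule coeff3_ext) (simp add: coeff3_dX coeff3_zp)
lemma dY_zp1: "dY (zp 1 :: 'a::idom mpoly3) = 0"
  by (rule coeff3_ext) (simp add: coeff3_dY coeff3_zp)
lemma dZ_zp1: "dZ (zp 1 :: 'a::idom mpoly3) = 1"
  by (rule coeff3_ext) (simp add: coeff3_dZ coeff3_zp coeff3_1)




definition pmap_idx :: "(nat \<Rightarrow> 'a::zero \<Rightarrow> 'b::zero) \<Rightarrow> 'a poly \<Rightarrow> 'b poly" where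
  "pmap_idx f p = Abs_poly (\<lambda>n. f n (coeff p n))"

lemma coeff_pmap_idx:
  assumes "\<And>n. f n 0 = 0"
  shows "coeff (pmap_idx f p) n = f n (coeff p n)"
proof -
  have "coeff (Abs_poly (\<lambda>n. f n (coeff p n))) = (\<lambda>n. f n (coeff p n))"
    by (rule coeff_Abs_poly[where n="degree p"]) (simp add: coeff_eq_0 assms)
  then show ?thesis by (simp add: pmap_idx_def)
qed

lemma pmap_idx_0: "(\<And>n. f n 0 = 0) \<Longrightarrow> pmap_idx f 0 = 0"
  by (rule poly_eqI) (simp add: coeff_pmap_idx)

locale wts =
  fixes w1 w2 w3 :: nat
  assumes w1: "w1 > 0" and w2: "w2 > 0" and w3: "w3 > 0"
begin

definition wt :: "nat \<Rightarrow> nat \<Rightarrow> nat \<Rightarrow> int" where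
  "wt a b c = int (a * w1 + b * w2 + c * w3)"

lemma wt_nonneg: "wt a b c \<ge> 0" by (simp add: wt_def)
lemma wt_Suc1: "wt (Suc a) b c = wt a b c + int w1" by (simp add: wt_def)
lemma wt_Suc2: "wt a (Suc b) c = wt a b c + int w2" by (simp add: wt_def)
lemma wt_Suc3: "wt a b (Suc c) = wt a b c + int w3" by (simp add: wt_def)

definition hom :: "int \<Rightarrow> 'a::field_char_0 mpoly3 \<Rightarrow> bool" where
  "hom E p \<longleftrightarrow> (\<forall>a b c. coeff3 p a b c \<noteq> 0 \<longrightarrow> wt a b c = E)"

definition eu :: "'a::field_char_0 mpoly3 \<Rightarrow> 'a mpoly3" where
  "eu p = const3 (of_nat w1) * (xp 1 * dX p) + const3 (of_nat w2) * (yp 1 * dY p)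
     + const3 (of_nat w3) * (zp 1 * dZ p)"

lemma coeff3_eu: "coeff3 (eu p) a b c = of_int (wt a b c) * coeff3 p a b c"
proof -
  have 1: "coeff3 (xp 1 * dX p) a b c = of_nat a * coeff3 p a b c"
    by (cases a) (auto simp: coeff3_xp_mult coeff3_dX)
  have 2: "coeff3 (yp 1 * dY p) a b c = of_nat b * coeff3 p a b c"
    by (cases b) (auto simp: coeff3_yp_mult coeff3_dY)
  have 3: "coeff3 (zp 1 * dZ p) a b c = of_nat c * coeff3 p a b c"
    by (cases c) (auto simp: coeff3_zp_mult coeff3_dZ)
  show ?thesis unfolding eu_def coeff3_add coeff3_const3_mult 1 2 3
    by (simp add: wt_def algebra_simps)
qed

lemma hom_iff_eu: "hom E p \<longleftrightarrow> eu p = const3 (of_int E) * p"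
proof
  assume "hom E p"
  then show "eu p = const3 (of_int E) * p"
    by (intro coeff3_ext) (auto simp: coeff3_eu coeff3_const3_mult hom_def)
next
  assume e: "eu p = const3 (of_int E) * p"
  show "hom E p" unfolding hom_def
  proof (intro allI impI)
    fix a b c assume nz: "coeff3 p a b c \<noteq> 0"
    have "of_int (wt a b c) * coeff3 p a b c = (of_int E :: 'a) * coeff3 p a b c"
      using arg_cong[OF e, of "\<lambda>q. coeff3 q a b c"] by (simp add: coeff3_eu coeff3_const3_mult)
    then have "(of_int (wt a b c) :: 'a) = of_int E" using nz by simp
    then show "wt a b c = E" by simp
  qed
qed

lemma eu_mult: "eu (p * q) = eu p * q + p * eu q"
  unfolding eu_def by (simp add: dX_mult dY_mult dZ_mult algebra_simps)

lemma hom_mult: "hom D p \<Longrightarrow> hom E q \<Longrightarrow> hom (D + E) (p * q)"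
  unfolding hom_iff_eu by (simp add: eu_mult const3_add algebra_simps)

lemma hom_0[simp]: "hom E 0" by (simp add: hom_def)
lemma hom_add: "hom E p \<Longrightarrow> hom E q \<Longrightarrow> hom E (p + q)"
  unfolding hom_def by (metis add.right_neutral add_0 coeff3_add)
lemma hom_diff: "hom E p \<Longrightarrow> hom E q \<Longrightarrow> hom E (p - q)"
  unfolding hom_def by (metis coeff3_diff diff_zero diff_self)
lemma hom_minus: "hom E p \<Longrightarrow> hom E (- p)"
  unfolding hom_def by simp
lemma hom_const3_mult: "hom E p \<Longrightarrow> hom E (const3 k * p)"
  unfolding hom_def by (simp add: coeff3_const3_mult)
lemma hom_sum: "(\<And>i. i \<in> S \<Longrightarrow> hom E (f i)) \<Longrightarrow> hom E (sum f S)"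
  by (induction S rule: infinite_finite_induct) (auto intro: hom_add)
lemma hom_dX: "hom E p \<Longrightarrow> hom (E - w1) (dX p)"
  unfolding hom_def by (auto simp: coeff3_dX) (metis wt_Suc1 add_diff_cancel_right')
lemma hom_dY: "hom E p \<Longrightarrow> hom (E - w2) (dY p)"
  unfolding hom_def by (auto simp: coeff3_dY) (metis wt_Suc2 add_diff_cancel_right')
lemma hom_dZ: "hom E p \<Longrightarrow> hom (E - w3) (dZ p)"
  unfolding hom_def by (auto simp: coeff3_dZ) (metis wt_Suc3 add_diff_cancel_right')
lemma hom_xp: "hom (int n * int w1) (xp n)"
  unfolding hom_def by (simp add: coeff3_xp wt_def)
lemma hom_yp: "hom (int n * int w2) (yp n)"
  unfolding hom_def by (simp add: coeff3_yp wt_def)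
lemma hom_zp: "hom (int n * int w3) (zp n)"
  unfolding hom_def by (simp add: coeff3_zp wt_def)
lemma hom_neg: "hom E p \<Longrightarrow> E < 0 \<Longrightarrow> p = 0"
  unfolding hom_def by (intro coeff3_ext) (metis coeff3_0 not_le wt_nonneg)
lemma hom_unique: "hom E p \<Longrightarrow> hom E' p \<Longrightarrow> E \<noteq> E' \<Longrightarrow> p = 0"
  unfolding hom_def by (intro coeff3_ext) (metis coeff3_0)

definition proj :: "int \<Rightarrow> 'a::field_char_0 mpoly3 \<Rightarrow> 'a mpoly3" where
  "proj E p = pmap_idx (\<lambda>c q. pmap_idx (\<lambda>b r. pmap_idx (\<lambda>a e. if wt a b c = E then e else 0) r) q) p"

lemma coeff3_proj: "coeff3 (proj E p) a b c = (if wt a b c = E then coeff3 p a b c else 0)"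
  unfolding proj_def coeff3_def
  by (simp add: coeff_pmap_idx pmap_idx_0)

lemma proj_add: "proj E (p + q) = proj E p + proj E q"
  by (rule coeff3_ext) (simp add: coeff3_proj)
lemma proj_diff: "proj E (p - q) = proj E p - proj E q"
  by (rule coeff3_ext) (simp add: coeff3_proj)
lemma proj_0: "proj E 0 = 0"
  by (rule coeff3_ext) (simp add: coeff3_proj)
lemma proj_const3_mult: "proj E (const3 k * p) = const3 k * proj E p"
  by (rule coeff3_ext) (simp add: coeff3_proj coeff3_const3_mult)
lemma proj_sum: "proj E (sum f S) = (\<Sum>i\<in>S. proj E (f i))"
  by (rule coeff3_ext) (simp add: coeff3_proj coeff3_sum)
lemma hom_proj: "hom E (proj E p)"
  unfolding hom_def by (simp add: coeff3_proj)
lemma proj_hom: "hom E' p \<Longrightarrow> proj E p = (if E = E' then p else 0)"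
  unfolding hom_def by (intro coeff3_ext) (auto simp: coeff3_proj)
lemma proj_dX: "proj E (dX p) = dX (proj (E + w1) p)"
  by (rule coeff3_ext) (simp add: coeff3_proj coeff3_dX wt_Suc1)
lemma proj_dY: "proj E (dY p) = dY (proj (E + w2) p)"
  by (rule coeff3_ext) (simp add: coeff3_proj coeff3_dY wt_Suc2)
lemma proj_dZ: "proj E (dZ p) = dZ (proj (E + w3) p)"
  by (rule coeff3_ext) (simp add: coeff3_proj coeff3_dZ wt_Suc3)

definition sz2 :: "'a::zero poly poly \<Rightarrow> nat" where
  "sz2 r = degree r + (\<Sum>b\<le>degree r. degree (coeff r b))"
definition sz3 :: "'a::zero poly poly poly \<Rightarrow> nat" where
  "sz3 p = degree p + (\<Sum>c\<le>degree p. sz2 (coeff p c))"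

lemma sz2_bound: "coeff (coeff r b) a \<noteq> 0 \<Longrightarrow> a + b \<le> sz2 r"
proof -
  assume nz: "coeff (coeff r b) a \<noteq> 0"
  then have b: "b \<le> degree r" by (metis coeff_0 le_degree)
  have a: "a \<le> degree (coeff r b)" using nz by (simp add: le_degree)
  have "degree (coeff r b) \<le> (\<Sum>b\<le>degree r. degree (coeff r b))"
    by (rule member_le_sum) (use b in auto)
  then show ?thesis using a b unfolding sz2_def by linarith
qed

lemma sz3_bound: "coeff3 p a b c \<noteq> 0 \<Longrightarrow> a + b + c \<le> sz3 p"
proof -
  assume nz: "coeff3 p a b c \<noteq> 0"
  then have nz': "coeff (coeff (coeff p c) b) a \<noteq> 0" by (simp add: coeff3_def)
  then have c: "c \<le> degree p" by (metis coeff_0 le_degree)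
  have ab: "a + b \<le> sz2 (coeff p c)" using sz2_bound[OF nz'] .
  have "sz2 (coeff p c) \<le> (\<Sum>c\<le>degree p. sz2 (coeff p c))"
    by (rule member_le_sum) (use c in auto)
  then show ?thesis using ab c unfolding sz3_def by linarith
qed

lemma wt_bound: "coeff3 p a b c \<noteq> 0 \<Longrightarrow> wt a b c \<le> int ((w1 + w2 + w3) * sz3 p)"
proof -
  assume "coeff3 p a b c \<noteq> 0"
  then have s: "a + b + c \<le> sz3 p" by (rule sz3_bound)
  have "a * w1 + b * w2 + c * w3 \<le> (a + b + c) * (w1 + w2 + w3)"
    by (simp add: algebra_simps)
  also have "\<dots> \<le> sz3 p * (w1 + w2 + w3)" using s by (rule mult_right_mono) simp
  finally have "a * w1 + b * w2 + c * w3 \<le> (w1 + w2 + w3) * sz3 p" by (simp add: mult.commute)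
  then show ?thesis unfolding wt_def by (simp only: of_nat_le_iff)
qed

definition bnd :: "'a::field_char_0 mpoly3 \<Rightarrow> int" where
  "bnd p = int ((w1 + w2 + w3) * sz3 p)"

lemma decomp:
  assumes "bnd p + s \<le> N" "0 \<le> s"
  shows "p = (\<Sum>D\<in>{-N..N}. proj (D - s) p)"
proof (rule coeff3_ext)
  fix a b c
  show "coeff3 p a b c = coeff3 (\<Sum>D\<in>{-N..N}. proj (D - s) p) a b c"
  proof (cases "coeff3 p a b c = 0")
    case True then show ?thesis by (auto simp: coeff3_sum coeff3_proj intro!: sum.neutral)
  next
    case False
    have "wt a b c \<le> bnd p" using wt_bound[OF False] by (simp add: bnd_def)
    then have mem: "wt a b c + s \<in> {-N..N}" using assms wt_nonneg[of a b c] by auto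
    have "coeff3 (\<Sum>D\<in>{-N..N}. proj (D - s) p) a b c
        = (\<Sum>D\<in>{-N..N}. if wt a b c = D - s then coeff3 p a b c else 0)"
      by (simp add: coeff3_sum coeff3_proj)
    also have "\<dots> = (\<Sum>D\<in>{-N..N}. if D = wt a b c + s then coeff3 p a b c else 0)"
      by (rule sum.cong) auto
    also have "\<dots> = coeff3 p a b c" using mem by (subst sum.delta) auto
    finally show ?thesis by simp
  qed
qed

lemma proj_mult:
  assumes q: "hom e q"
  shows "proj E (p * q) = proj (E - e) p * q"
proof -
  define N where "N = bnd p + \<bar>E - e\<bar>"
  have p: "p = (\<Sum>D\<in>{-N..N}. proj D p)"
    using decomp[of p 0 N] by (simp add: N_def)
  have "bnd p \<ge> 0" by (simp add: bnd_def)
  then have mem: "E - e \<in> {-N..N}" unfolding N_def by auto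
  have "proj E (p * q) = (\<Sum>D\<in>{-N..N}. proj E (proj D p * q))"
    by (subst p) (simp add: sum_distrib_right proj_sum)
  also have "\<dots> = (\<Sum>D\<in>{-N..N}. if D = E - e then proj D p * q else 0)"
  proof (rule sum.cong)
    fix D assume "D \<in> {-N..N}"
    have "hom (D + e) (proj D p * q)" by (rule hom_mult[OF hom_proj q])
    then show "proj E (proj D p * q) = (if D = E - e then proj D p * q else 0)"
      by (simp add: proj_hom) 
  qed simp
  also have "\<dots> = proj (E - e) p * q" using mem by (simp add: sum.delta')
  finally show ?thesis .
qed

end



lemma lin_dep:
  fixes K :: "'i \<Rightarrow> 's \<Rightarrow> 'a::field"
  assumes "finite S" "finite I" "card S < card I"
  shows "\<exists>c. (\<exists>i\<in>I. c i \<noteq> 0) \<and> (\<forall>s\<in>S. (\<Sum>i\<in>I. c i * K i s) = 0)"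
  using assms
proof (induction S arbitrary: I K rule: finite_induct)
  case empty
  then obtain i where "i \<in> I" by fastforce
  then show ?case by (intro exI[of _ "\<lambda>j. if j = i then 1 else 0"]) auto
next
  case (insert s0 S)
  show ?case
  proof (cases "\<forall>i\<in>I. K i s0 = 0")
    case True
    have "card S < card I" using insert by simp
    then obtain c where c: "\<exists>i\<in>I. c i \<noteq> 0" "\<forall>s\<in>S. (\<Sum>i\<in>I. c i * K i s) = 0"
      using insert.IH[of I K] insert.prems by blast
    show ?thesis using c True by (intro exI[of _ c]) auto
  next
    case False
    then obtain i0 where i0: "i0 \<in> I" "K i0 s0 \<noteq> 0" by blast
    define p where "p = K i0 s0"
    define I' where "I' = I - {i0}"
    define K' where "K' = (\<lambda>i s. K i s * p - K i0 s * K i s0)"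
    have fI': "finite I'" using insert.prems by (simp add: I'_def)
    have "card I' = card I - 1" using i0 insert.prems by (simp add: I'_def)
    then have "card S < card I'" using insert by simp
    then obtain c' where c': "\<exists>i\<in>I'. c' i \<noteq> 0" "\<forall>s\<in>S. (\<Sum>i\<in>I'. c' i * K' i s) = 0"
      using insert.IH[of I' K'] fI' by blast
    define c where "c = (\<lambda>i. if i = i0 then - (\<Sum>j\<in>I'. c' j * K j s0) else c' i * p)"
    have sumI: "(\<Sum>i\<in>I. c i * K i s) = c i0 * K i0 s + (\<Sum>i\<in>I'. c i * K i s)" for s
      using i0 insert.prems by (simp add: I'_def sum.remove)
    have cI': "(\<Sum>i\<in>I'. c i * K i s) = (\<Sum>i\<in>I'. c' i * p * K i s)" for s
      by (rule sum.cong) (auto simp: c_def I'_def)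
    have key: "(\<Sum>i\<in>I. c i * K i s) = (\<Sum>i\<in>I'. c' i * K' i s)" for s
    proof -
      have "(\<Sum>i\<in>I. c i * K i s) = - (\<Sum>j\<in>I'. c' j * K j s0) * K i0 s + (\<Sum>i\<in>I'. c' i * p * K i s)"
        unfolding sumI cI' by (simp add: c_def)
      also have "\<dots> = (\<Sum>i\<in>I'. c' i * p * K i s) - (\<Sum>j\<in>I'. c' j * K j s0) * K i0 s"
        by simp
      also have "\<dots> = (\<Sum>i\<in>I'. c' i * p * K i s - c' i * K i s0 * K i0 s)"
        by (simp add: sum_subtractf sum_distrib_right)
      also have "\<dots> = (\<Sum>i\<in>I'. c' i * K' i s)"
        by (rule sum.cong) (simp_all add: K'_def algebra_simps)
      finally show ?thesis .
    qed
    show ?thesis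
    proof (intro exI[of _ c] conjI)
      obtain j where j: "j \<in> I'" "c' j \<noteq> 0" using c' by blast
      then have "c j \<noteq> 0" using i0 by (auto simp: c_def I'_def p_def)
      then show "\<exists>i\<in>I. c i \<noteq> 0" using j by (auto simp: I'_def)
      show "\<forall>s\<in>insert s0 S. (\<Sum>i\<in>I. c i * K i s) = 0"
      proof
        fix s assume "s \<in> insert s0 S"
        then consider "s = s0" | "s \<in> S" by blast
        then show "(\<Sum>i\<in>I. c i * K i s) = 0"
        proof cases
          case 1
          have "K' i s0 = 0" for i by (simp add: K'_def p_def)
          then show ?thesis using 1 by (simp add: key)
        next
          case 2 then show ?thesis using c' by (simp add: key)
        qed
      qed
    qed
  qed
qed

context wts begin

definition Jf :: "'a::field_char_0 mpoly3 \<Rightarrow> 'a mpoly3 \<Rightarrow> 'a mpoly3 \<Rightarrow> 'a mpoly3 set" where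
  "Jf f1 f2 f3 = {a * f1 + b * f2 + c * f3 | a b c. True}"

lemma Jf_add: assumes "p \<in> Jf f1 f2 f3" "q \<in> Jf f1 f2 f3" shows "p + q \<in> Jf f1 f2 f3"
proof -
  obtain a b c where "p = a * f1 + b * f2 + c * f3" using assms(1) unfolding Jf_def by blast
  moreover obtain a' b' c' where "q = a' * f1 + b' * f2 + c' * f3" using assms(2) unfolding Jf_def by blast
  ultimately have "p + q = (a + a') * f1 + (b + b') * f2 + (c + c') * f3" by (simp add: algebra_simps)
  then show ?thesis unfolding Jf_def by blast
qed
lemma Jf_diff: assumes "p \<in> Jf f1 f2 f3" "q \<in> Jf f1 f2 f3" shows "p - q \<in> Jf f1 f2 f3"
proof -
  obtain a b c where "p = a * f1 + b * f2 + c * f3" using assms(1) unfolding Jf_def by blast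
  moreover obtain a' b' c' where "q = a' * f1 + b' * f2 + c' * f3" using assms(2) unfolding Jf_def by blast
  ultimately have "p - q = (a - a') * f1 + (b - b') * f2 + (c - c') * f3" by (simp add: algebra_simps)
  then show ?thesis unfolding Jf_def by blast
qed
lemma Jf_mult: assumes "p \<in> Jf f1 f2 f3" shows "r * p \<in> Jf f1 f2 f3"
proof -
  obtain a b c where "p = a * f1 + b * f2 + c * f3" using assms(1) unfolding Jf_def by blast
  then have "r * p = (r * a) * f1 + (r * b) * f2 + (r * c) * f3" by (simp add: algebra_simps)
  then show ?thesis unfolding Jf_def by blast
qed
lemma Jf_0: "0 \<in> Jf f1 f2 f3"
  unfolding Jf_def by (intro CollectI exI[of _ 0]) simp
lemma Jf_sum: "(\<And>i. i \<in> S \<Longrightarrow> g i \<in> Jf f1 f2 f3) \<Longrightarrow> sum g S \<in> Jf f1 f2 f3"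
  by (induction S rule: infinite_finite_induct) (auto intro: Jf_add Jf_0)

lemma Jf_proj:
  assumes "p \<in> Jf f1 f2 f3" "hom e1 f1" "hom e2 f2" "hom e3 f3"
  shows "proj E p \<in> Jf f1 f2 f3"
proof -
  obtain a b c where "p = a * f1 + b * f2 + c * f3" using assms(1) unfolding Jf_def by blast
  then have "proj E p = proj (E - e1) a * f1 + proj (E - e2) b * f2 + proj (E - e3) c * f3"
    by (simp add: proj_add proj_mult[OF assms(2)] proj_mult[OF assms(3)] proj_mult[OF assms(4)])
  then show ?thesis unfolding Jf_def by blast
qed

lemma mon_in_Jf:
  fixes mon :: "nat \<Rightarrow> 'a::field_char_0 mpoly3" and w :: nat
  assumes fin: "finite S" and span: "\<forall>p. \<exists>k. p - (\<Sum>s\<in>S. const3 (k s) * s) \<in> Jf f1 f2 f3"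
    and h: "hom e1 f1" "hom e2 f2" "hom e3 f3"
    and w: "w > 0" and mon: "\<And>n. hom (int n * int w) (mon n)"
  shows "\<exists>n. mon n \<in> Jf f1 f2 f3"
proof -
  define J where "J = Jf f1 f2 f3"
  define K where "K = (\<lambda>n. SOME k. mon n - (\<Sum>s\<in>S. const3 (k s) * s) \<in> J)"
  have K: "mon n - (\<Sum>s\<in>S. const3 (K n s) * s) \<in> J" for n
  proof -
    have ex: "\<exists>k. mon n - (\<Sum>s\<in>S. const3 (k s) * s) \<in> J" using span by (simp add: J_def)
    show ?thesis unfolding K_def using someI_ex[OF ex] .
  qed
  define I where "I = {0..card S}"
  have "card S < card I" by (simp add: I_def)
  then obtain c where c: "\<exists>i\<in>I. c i \<noteq> 0" "\<forall>s\<in>S. (\<Sum>i\<in>I. c i * K i s) = 0"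
    using lin_dep[OF fin, of I K] by (auto simp: I_def)
  define P where "P = (\<Sum>n\<in>I. const3 (c n) * mon n)"
  have eq: "P = (\<Sum>n\<in>I. const3 (c n) * (mon n - (\<Sum>s\<in>S. const3 (K n s) * s)))
           + (\<Sum>s\<in>S. const3 (\<Sum>n\<in>I. c n * K n s) * s)"
  proof -
    have "(\<Sum>s\<in>S. const3 (\<Sum>n\<in>I. c n * K n s) * s) = (\<Sum>s\<in>S. \<Sum>n\<in>I. const3 (c n) * (const3 (K n s) * s))"
      by (simp add: const3_sum const3_mult sum_distrib_right mult.assoc)
    also have "\<dots> = (\<Sum>n\<in>I. const3 (c n) * (\<Sum>s\<in>S. const3 (K n s) * s))"
      by (subst sum.swap) (simp add: sum_distrib_left)
    finally show ?thesis unfolding P_def by (simp add: right_diff_distrib sum_subtractf)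
  qed
  have "(\<Sum>s\<in>S. const3 (\<Sum>n\<in>I. c n * K n s) * s) = 0"
    using c(2) by (simp add: const3_0)
  then have PJ: "P \<in> J"
  proof -
    have "const3 (c n) * (mon n - (\<Sum>s\<in>S. const3 (K n s) * s)) \<in> J" for n
      using K[of n] unfolding J_def by (rule Jf_mult)
    then have "(\<Sum>n\<in>I. const3 (c n) * (mon n - (\<Sum>s\<in>S. const3 (K n s) * s))) \<in> J"
      unfolding J_def by (intro Jf_sum) 
    then show ?thesis using \<open>(\<Sum>s\<in>S. const3 (\<Sum>n\<in>I. c n * K n s) * s) = 0\<close> eq by simp
  qed
  obtain m where m: "m \<in> I" "c m \<noteq> 0" using c(1) by blast
  have "proj (int m * int w) P = (\<Sum>n\<in>I. const3 (c n) * proj (int m * int w) (mon n))"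
    by (simp add: P_def proj_sum proj_const3_mult)
  also have "\<dots> = (\<Sum>n\<in>I. if n = m then const3 (c n) * mon n else 0)"
    by (rule sum.cong) (use w in \<open>auto simp: proj_hom[OF mon]\<close>)
  also have "\<dots> = const3 (c m) * mon m" using m by (simp add: I_def)
  finally have "const3 (c m) * mon m \<in> J"
    using Jf_proj[OF PJ[unfolded J_def] h, of "int m * int w"] by (simp add: J_def)
  then have "const3 (inverse (c m)) * (const3 (c m) * mon m) \<in> J"
    unfolding J_def by (rule Jf_mult)
  then have "mon m \<in> J" using m by (simp add: mult.assoc[symmetric] const3_mult[symmetric] const3_1)
  then show ?thesis unfolding J_def by blast
qed

end



lemma R2:
  fixes w :: "'a::field mpoly3"
  assumes "zp c dvd yp b * w" shows "zp c dvd w"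
proof -
  have "coeff (yp b * w) k = monom 1 b * coeff w k" for k
    by (simp add: yp_def)
  then have "\<forall>k<c. monom 1 b * coeff w k = 0"
    using assms by (metis monom_1_dvd_iff' zp_def)
  then have "\<forall>k<c. coeff w k = 0" by simp
  then show ?thesis by (simp add: zp_def monom_1_dvd_iff')
qed

definition Iyz :: "nat \<Rightarrow> nat \<Rightarrow> 'a::field mpoly3 set" where
  "Iyz b c = {zp c * P + yp b * Q | P Q. True}"

lemma Iyz_iff: "(t :: 'a::field mpoly3) \<in> Iyz b c \<longleftrightarrow> (\<forall>k<c. \<forall>j<b. coeff (coeff t k) j = 0)"
proof
  assume "t \<in> Iyz b c"
  then obtain P Q where t: "t = zp c * P + yp b * Q" unfolding Iyz_def by blast
  show "\<forall>k<c. \<forall>j<b. coeff (coeff t k) j = 0"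
    by (simp add: t zp_def yp_def coeff_monom_mult)
next
  assume H: "\<forall>k<c. \<forall>j<b. coeff (coeff t k) j = 0"
  define t0 where "t0 = (\<Sum>k<c. monom (coeff t k) k)"
  have ct0: "coeff t0 k = (if k < c then coeff t k else 0)" for k
    by (simp add: t0_def coeff_sum coeff_monom)
  have "monom 1 c dvd (t - t0)"
    unfolding monom_1_dvd_iff' by (simp add: ct0)
  then obtain P where P: "t - t0 = zp c * P" by (auto simp: zp_def)
  have "[:monom 1 b:] dvd t0"
    unfolding const_poly_dvd_iff
  proof
    fix n show "monom 1 b dvd coeff t0 n"
      using H by (simp add: ct0 monom_1_dvd_iff')
  qed
  then obtain Q where Q: "t0 = yp b * Q" by (auto simp: yp_def)
  have "t = zp c * P + yp b * Q" using P Q by (simp add: algebra_simps)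
  then show "t \<in> Iyz b c" unfolding Iyz_def by blast
qed

lemma Iyz_add: assumes "p \<in> Iyz b c" "q \<in> Iyz b c" shows "p + q \<in> Iyz b c"
  using assms by (simp add: Iyz_iff)
lemma Iyz_mult: assumes "p \<in> Iyz b c" shows "r * p \<in> Iyz b c"
proof -
  obtain P Q where "p = zp c * P + yp b * Q" using assms unfolding Iyz_def by blast
  then have "r * p = zp c * (r * P) + yp b * (r * Q)" by (simp add: algebra_simps)
  then show ?thesis unfolding Iyz_def by blast
qed

lemma R3:
  fixes t :: "'a::field mpoly3"
  assumes "xp a * t \<in> Iyz b c" shows "t \<in> Iyz b c"
proof -
  have "coeff (coeff (xp a * t) k) j = monom 1 a * coeff (coeff t k) j" for k j
    by (simp add: xp_def)
  then show ?thesis using assms unfolding Iyz_iff by (metis mult_eq_0_iff monom_eq_0_iff one_neq_zero)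
qed

lemma zp_nz: "zp c \<noteq> (0 :: 'a::field mpoly3)"
  by (simp add: zp_def)

lemma koszul:
  fixes f1 f2 f3 :: "'a::field mpoly3"
  assumes u: "zp c = l1 * f1 + l2 * f2 + l3 * f3"
    and v: "yp b = m1 * f1 + m2 * f2 + m3 * f3"
    and s: "xp a = n1 * f1 + n2 * f2 + n3 * f3"
    and A: "a1 * f1 + a2 * f2 + a3 * f3 = 0"
  shows "\<exists>G1 G2 G3. a1 = G2 * f3 - G3 * f2 \<and> a2 = G3 * f1 - G1 * f3 \<and> a3 = G1 * f2 - G2 * f1"
proof -
  let ?u = "zp c :: 'a mpoly3" and ?v = "yp b :: 'a mpoly3"
  have H3: "t \<in> Iyz b c" if "t * f1 \<in> Iyz b c" "t * f2 \<in> Iyz b c" "t * f3 \<in> Iyz b c" for t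
  proof -
    have "xp a * t = n1 * (t * f1) + n2 * (t * f2) + n3 * (t * f3)"
      by (simp add: s algebra_simps)
    also have "\<dots> \<in> Iyz b c" by (rule Iyz_add[OF Iyz_add[OF Iyz_mult[OF that(1)] Iyz_mult[OF that(2)]] Iyz_mult[OF that(3)]])
    finally show ?thesis by (rule R3)
  qed
  have H2: "\<exists>q r1 r2 r3. G1 = q * f1 + ?u * r1 \<and> G2 = q * f2 + ?u * r2 \<and> G3 = q * f3 + ?u * r3"
    if e1: "G2 * f3 - G3 * f2 = ?u * b1" and e2: "G3 * f1 - G1 * f3 = ?u * b2"
      and e3: "G1 * f2 - G2 * f1 = ?u * b3" for G1 G2 G3 b1 b2 b3
  proof -
    define t0 where "t0 = m1 * G1 + m2 * G2 + m3 * G3"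
    have k1: "?v * G1 = ?u * (m2 * b3 - m3 * b2) + t0 * f1"
      unfolding t0_def v using e1 e2 e3 by algebra
    have k2: "?v * G2 = ?u * (m3 * b1 - m1 * b3) + t0 * f2"
      unfolding t0_def v using e1 e2 e3 by algebra
    have k3: "?v * G3 = ?u * (m1 * b2 - m2 * b1) + t0 * f3"
      unfolding t0_def v using e1 e2 e3 by algebra
    have "t0 * f1 = ?u * (- (m2 * b3 - m3 * b2)) + ?v * G1" using k1 by algebra
    then have i1: "t0 * f1 \<in> Iyz b c" unfolding Iyz_def by blast
    have "t0 * f2 = ?u * (- (m3 * b1 - m1 * b3)) + ?v * G2" using k2 by algebra
    then have i2: "t0 * f2 \<in> Iyz b c" unfolding Iyz_def by blast
    have "t0 * f3 = ?u * (- (m1 * b2 - m2 * b1)) + ?v * G3" using k3 by algebra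
    then have i3: "t0 * f3 \<in> Iyz b c" unfolding Iyz_def by blast
    from i1 i2 i3 have "t0 \<in> Iyz b c" by (rule H3)
    then obtain p q where pq: "t0 = ?u * p + ?v * q" unfolding Iyz_def by blast
    have d1: "?u dvd ?v * (G1 - q * f1)"
      by (rule dvdI[of _ _ "m2 * b3 - m3 * b2 + p * f1"]) (use k1 pq in algebra)
    have d2: "?u dvd ?v * (G2 - q * f2)"
      by (rule dvdI[of _ _ "m3 * b1 - m1 * b3 + p * f2"]) (use k2 pq in algebra)
    have d3: "?u dvd ?v * (G3 - q * f3)"
      by (rule dvdI[of _ _ "m1 * b2 - m2 * b1 + p * f3"]) (use k3 pq in algebra)
    obtain r1 where "G1 - q * f1 = ?u * r1" using R2[OF d1] by (elim dvdE)
    moreover obtain r2 where "G2 - q * f2 = ?u * r2" using R2[OF d2] by (elim dvdE)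
    moreover obtain r3 where "G3 - q * f3 = ?u * r3" using R2[OF d3] by (elim dvdE)
    ultimately show ?thesis by (intro exI[of _ q] exI[of _ r1] exI[of _ r2] exI[of _ r3]) (simp add: algebra_simps)
  qed
  define g1 where "g1 = l2 * a3 - l3 * a2"
  define g2 where "g2 = l3 * a1 - l1 * a3"
  define g3 where "g3 = l1 * a2 - l2 * a1"
  have "g2 * f3 - g3 * f2 = ?u * a1" unfolding g2_def g3_def u using A by algebra
  moreover have "g3 * f1 - g1 * f3 = ?u * a2" unfolding g1_def g3_def u using A by algebra
  moreover have "g1 * f2 - g2 * f1 = ?u * a3" unfolding g1_def g2_def u using A by algebra
  ultimately obtain q r1 r2 r3 where r: "g1 = q * f1 + ?u * r1" "g2 = q * f2 + ?u * r2" "g3 = q * f3 + ?u * r3"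
    using H2 by blast
  have "?u * a1 = ?u * (r2 * f3 - r3 * f2)" using \<open>g2 * f3 - g3 * f2 = ?u * a1\<close> r by algebra
  moreover have "?u * a2 = ?u * (r3 * f1 - r1 * f3)" using \<open>g3 * f1 - g1 * f3 = ?u * a2\<close> r by algebra
  moreover have "?u * a3 = ?u * (r1 * f2 - r2 * f1)" using \<open>g1 * f2 - g2 * f1 = ?u * a3\<close> r by algebra
  ultimately have "a1 = r2 * f3 - r3 * f2" "a2 = r3 * f1 - r1 * f3" "a3 = r1 * f2 - r2 * f1"
    using zp_nz[of c] by auto
  then show ?thesis by blast
qed




lemma dX_const3_mult: "dX (const3 k * p) = const3 k * dX (p :: 'a::idom mpoly3)"
  by (simp add: dX_mult dX_const3)
lemma dY_const3_mult: "dY (const3 k * p) = const3 k * dY (p :: 'a::idom mpoly3)"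
  by (simp add: dY_mult dY_const3)
lemma dZ_const3_mult: "dZ (const3 k * p) = const3 k * dZ (p :: 'a::idom mpoly3)"
  by (simp add: dZ_mult dZ_const3)

lemmas dsimps = dX_add dY_add dZ_add dX_diff dY_diff dZ_diff dX_mult dY_mult dZ_mult
  dX_const3 dY_const3 dZ_const3 dX_xp1 dY_xp1 dZ_xp1 dX_yp1 dY_yp1 dZ_yp1 dX_zp1 dY_zp1 dZ_zp1
  dYX dZX dZY
  dX_xp1[unfolded One_nat_def] dY_xp1[unfolded One_nat_def] dZ_xp1[unfolded One_nat_def]
  dX_yp1[unfolded One_nat_def] dY_yp1[unfolded One_nat_def] dZ_yp1[unfolded One_nat_def]
  dX_zp1[unfolded One_nat_def] dY_zp1[unfolded One_nat_def] dZ_zp1[unfolded One_nat_def]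

context wts begin

lemma hom_cong: "hom E p \<Longrightarrow> E = E' \<Longrightarrow> hom E' p" by simp

lemma poincare_hom:
  fixes k1 k2 k3 :: "'a::field_char_0 mpoly3" and D :: int
  assumes h1: "hom (D - w1) k1" and h2: "hom (D - w2) k2" and h3: "hom (D - w3) k3"
    and c1: "dY k3 = dZ k2" and c2: "dZ k1 = dX k3" and c3: "dX k2 = dY k1"
  shows "\<exists>F. hom D F \<and> k1 = dX F \<and> k2 = dY F \<and> k3 = dZ F"
proof (cases "D \<le> 0")
  case True
  have "D - int w1 < 0" "D - int w2 < 0" "D - int w3 < 0" using \<open>D \<le> 0\<close> w1 w2 w3 by simp_all
  then have "k1 = 0" "k2 = 0" "k3 = 0"
    using hom_neg[OF h1] hom_neg[OF h2] hom_neg[OF h3] by blast+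
  then show ?thesis by (intro exI[of _ 0]) (simp add: dX_0 dY_0 dZ_0)
next
  case False
  define Ek where "Ek = const3 (of_nat w1) * (xp 1 * k1) + const3 (of_nat w2) * (yp 1 * k2)
     + const3 (of_nat w3) * (zp 1 * k3)"
  have e1: "eu k1 = const3 (of_int (D - w1)) * k1" using h1 by (simp add: hom_iff_eu)
  have e2: "eu k2 = const3 (of_int (D - w2)) * k2" using h2 by (simp add: hom_iff_eu)
  have e3: "eu k3 = const3 (of_int (D - w3)) * k3" using h3 by (simp add: hom_iff_eu)
  have "dX Ek = const3 (of_nat w1) * k1 + eu k1"
    unfolding Ek_def eu_def by (simp add: dsimps c2[symmetric] c3 algebra_simps)
  also have "\<dots> = (const3 (of_nat w1) + const3 (of_int (D - w1))) * k1" by (simp add: e1 distrib_right)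
  also have "\<dots> = const3 (of_int D) * k1" by (simp flip: const3_add)
  finally have dx: "dX Ek = const3 (of_int D) * k1" .
  have "dY Ek = const3 (of_nat w2) * k2 + eu k2"
    unfolding Ek_def eu_def by (simp add: dsimps c1 c3[symmetric] algebra_simps)
  also have "\<dots> = (const3 (of_nat w2) + const3 (of_int (D - w2))) * k2" by (simp add: e2 distrib_right)
  also have "\<dots> = const3 (of_int D) * k2" by (simp flip: const3_add)
  finally have dy: "dY Ek = const3 (of_int D) * k2" .
  have "dZ Ek = const3 (of_nat w3) * k3 + eu k3"
    unfolding Ek_def eu_def by (simp add: dsimps c1[symmetric] c2 algebra_simps)
  also have "\<dots> = (const3 (of_nat w3) + const3 (of_int (D - w3))) * k3" by (simp add: e3 distrib_right)
  also have "\<dots> = const3 (of_int D) * k3" by (simp flip: const3_add)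
  finally have dz: "dZ Ek = const3 (of_int D) * k3" .
  have hx: "hom (int w1) (xp 1)" using hom_xp[of 1] by simp
  have hy: "hom (int w2) (yp 1)" using hom_yp[of 1] by simp
  have hz: "hom (int w3) (zp 1)" using hom_zp[of 1] by simp
  have hE: "hom D Ek" unfolding Ek_def
    by (intro hom_add hom_const3_mult hom_cong[OF hom_mult[OF hx h1]] hom_cong[OF hom_mult[OF hy h2]]
        hom_cong[OF hom_mult[OF hz h3]]) simp_all
  define F where "F = const3 (inverse (of_int D)) * Ek"
  have D0: "(of_int D :: 'a) \<noteq> 0" using False by simp
  have inv: "const3 (inverse (of_int D)) * (const3 (of_int D) * p) = (p :: 'a mpoly3)" for p
  proof -
    have "inverse (of_int D) * of_int D = (1::'a)" using D0 by simp
    then show ?thesis by (simp add: mult.assoc[symmetric] const3_mult[symmetric] const3_1)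
  qed
  show ?thesis
    by (intro exI[of _ F] conjI) (simp_all add: F_def hom_const3_mult hE dX_const3_mult dY_const3_mult dZ_const3_mult dx dy dz inv)
qed

end



locale mainloc = wts +
  fixes phi :: "'a::field_char_0 mpoly3" and d :: int and a b c :: nat
    and l1 l2 l3 m1 m2 m3 n1 n2 n3 :: "'a mpoly3"
  assumes phi: "hom d phi" and dpos: "d > 0"
    and u: "zp c = l1 * dX phi + l2 * dY phi + l3 * dZ phi"
    and v: "yp b = m1 * dX phi + m2 * dY phi + m3 * dZ phi"
    and s: "xp a = n1 * dX phi + n2 * dY phi + n3 * dZ phi"
begin

abbreviation "f1 \<equiv> dX phi"
abbreviation "f2 \<equiv> dY phi"
abbreviation "f3 \<equiv> dZ phi"

lemma hf1: "hom (d - w1) f1" by (rule hom_dX[OF phi])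
lemma hf2: "hom (d - w2) f2" by (rule hom_dY[OF phi])
lemma hf3: "hom (d - w3) f3" by (rule hom_dZ[OF phi])

lemma main_hom:
  fixes D :: int
  assumes "hom (D - w1) h1" "hom (D - w2) h2" "hom (D - w3) h3"
    and "(dY h3 - dZ h2) * f1 + (dZ h1 - dX h3) * f2 + (dX h2 - dY h1) * f3 = 0"
  shows "\<exists>F g. hom D F \<and> hom (D - d) g \<and> h1 = dX F + g * f1 \<and> h2 = dY F + g * f2 \<and> h3 = dZ F + g * f3"
  using assms
proof (induction "nat D" arbitrary: D h1 h2 h3 rule: less_induct)
  case less
  note hh1 = less.prems(1) and hh2 = less.prems(2) and hh3 = less.prems(3) and cond = less.prems(4)
  show ?case
  proof (cases "D \<le> 0")
    case True
    have "D - int w1 < 0" "D - int w2 < 0" "D - int w3 < 0" using \<open>D \<le> 0\<close> w1 w2 w3 by simp_all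
    then have "h1 = 0" "h2 = 0" "h3 = 0"
      using hom_neg[OF hh1] hom_neg[OF hh2] hom_neg[OF hh3] by blast+
    then show ?thesis by (intro exI[of _ 0]) (simp add: dX_0 dY_0 dZ_0)
  next
    case False
    define c1 where "c1 = dY h3 - dZ h2"
    define c2 where "c2 = dZ h1 - dX h3"
    define c3 where "c3 = dX h2 - dY h1"
    have hc1: "hom (D - w2 - w3) c1" unfolding c1_def
      by (intro hom_diff hom_cong[OF hom_dY[OF hh3]] hom_cong[OF hom_dZ[OF hh2]]) simp_all
    have hc2: "hom (D - w1 - w3) c2" unfolding c2_def
      by (intro hom_diff hom_cong[OF hom_dZ[OF hh1]] hom_cong[OF hom_dX[OF hh3]]) simp_all
    have hc3: "hom (D - w1 - w2) c3" unfolding c3_def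
      by (intro hom_diff hom_cong[OF hom_dX[OF hh2]] hom_cong[OF hom_dY[OF hh1]]) simp_all
    obtain G1 G2 G3 where G: "c1 = G2 * f3 - G3 * f2" "c2 = G3 * f1 - G1 * f3" "c3 = G1 * f2 - G2 * f1"
      using koszul[OF u v s, of c1 c2 c3] cond unfolding c1_def c2_def c3_def by blast
    define H1 where "H1 = proj (D - d - w1) G1"
    define H2 where "H2 = proj (D - d - w2) G2"
    define H3 where "H3 = proj (D - d - w3) G3"
    have p23: "D - w2 - w3 - (d - w3) = D - d - w2" "D - w2 - w3 - (d - w2) = D - d - w3"
      "D - w1 - w3 - (d - w1) = D - d - w3" "D - w1 - w3 - (d - w3) = D - d - w1"
      "D - w1 - w2 - (d - w2) = D - d - w1" "D - w1 - w2 - (d - w1) = D - d - w2" by simp_all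
    have H: "c1 = H2 * f3 - H3 * f2" "c2 = H3 * f1 - H1 * f3" "c3 = H1 * f2 - H2 * f1"
    proof -
      have "c1 = proj (D - w2 - w3) c1" using proj_hom[OF hc1] by simp
      also have "\<dots> = H2 * f3 - H3 * f2"
        by (simp only: G proj_diff proj_mult[OF hf3] proj_mult[OF hf2] p23 H2_def H3_def)
      finally show "c1 = H2 * f3 - H3 * f2" .
      have "c2 = proj (D - w1 - w3) c2" using proj_hom[OF hc2] by simp
      also have "\<dots> = H3 * f1 - H1 * f3"
        by (simp only: G proj_diff proj_mult[OF hf1] proj_mult[OF hf3] p23 H1_def H3_def)
      finally show "c2 = H3 * f1 - H1 * f3" .
      have "c3 = proj (D - w1 - w2) c3" using proj_hom[OF hc3] by simp
      also have "\<dots> = H1 * f2 - H2 * f1"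
        by (simp only: G proj_diff proj_mult[OF hf1] proj_mult[OF hf2] p23 H1_def H2_def)
      finally show "c3 = H1 * f2 - H2 * f1" .
    qed
    have divc: "dX c1 + dY c2 + dZ c3 = 0"
      unfolding c1_def c2_def c3_def by (simp add: dsimps)
    have condH: "(dY H3 - dZ H2) * f1 + (dZ H1 - dX H3) * f2 + (dX H2 - dY H1) * f3 = 0"
    proof -
      have "(dY H3 - dZ H2) * f1 + (dZ H1 - dX H3) * f2 + (dX H2 - dY H1) * f3 = dX c1 + dY c2 + dZ c3"
        unfolding H by (simp add: dsimps algebra_simps)
      then show ?thesis using divc by simp
    qed
    have hH1: "hom (D - d - w1) H1" unfolding H1_def by (rule hom_proj)
    have hH2: "hom (D - d - w2) H2" unfolding H2_def by (rule hom_proj)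
    have hH3: "hom (D - d - w3) H3" unfolding H3_def by (rule hom_proj)
    have lt: "nat (D - d) < nat D" using False dpos by simp
    obtain F' g' where F': "hom (D - d) F'" "H1 = dX F' + g' * f1" "H2 = dY F' + g' * f2" "H3 = dZ F' + g' * f3"
      using less.hyps[OF lt hH1 hH2 hH3 condH] by blast
    define k1 where "k1 = h1 - F' * f1"
    define k2 where "k2 = h2 - F' * f2"
    define k3 where "k3 = h3 - F' * f3"
    have hk1: "hom (D - w1) k1" unfolding k1_def
      by (intro hom_diff hh1 hom_cong[OF hom_mult[OF F'(1) hf1]]) simp
    have hk2: "hom (D - w2) k2" unfolding k2_def
      by (intro hom_diff hh2 hom_cong[OF hom_mult[OF F'(1) hf2]]) simp
    have hk3: "hom (D - w3) k3" unfolding k3_def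
      by (intro hom_diff hh3 hom_cong[OF hom_mult[OF F'(1) hf3]]) simp
    have e1: "dY h3 - dZ h2 = dY F' * f3 - dZ F' * f2"
      using H(1) unfolding c1_def F' by (simp add: algebra_simps)
    have e2: "dZ h1 - dX h3 = dZ F' * f1 - dX F' * f3"
      using H(2) unfolding c2_def F' by (simp add: algebra_simps)
    have e3: "dX h2 - dY h1 = dX F' * f2 - dY F' * f1"
      using H(3) unfolding c3_def F' by (simp add: algebra_simps)
    have k1': "dY k3 = dZ k2" using e1 unfolding k2_def k3_def by (simp add: dsimps algebra_simps)
    have k2': "dZ k1 = dX k3" using e2 unfolding k1_def k3_def by (simp add: dsimps algebra_simps)
    have k3': "dX k2 = dY k1" using e3 unfolding k1_def k2_def by (simp add: dsimps algebra_simps)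
    obtain F where F: "hom D F" "k1 = dX F" "k2 = dY F" "k3 = dZ F"
      using poincare_hom[OF hk1 hk2 hk3 k1' k2' k3'] by blast
    show ?thesis
      by (intro exI[of _ F] exI[of _ F'] conjI F(1) F'(1))
        (use F k1_def k2_def k3_def in \<open>simp_all add: algebra_simps\<close>)
  qed
qed

end



context mainloc begin

lemma main_general:
  assumes cond: "(dY h3 - dZ h2) * f1 + (dZ h1 - dX h3) * f2 + (dX h2 - dY h1) * f3 = 0"
  shows "\<exists>F g. h1 = dX F + g * f1 \<and> h2 = dY F + g * f2 \<and> h3 = dZ F + g * f3"
proof -
  define N where "N = bnd h1 + bnd h2 + bnd h3 + int w1 + int w2 + int w3"
  have b: "bnd h1 \<ge> 0" "bnd h2 \<ge> 0" "bnd h3 \<ge> 0" by (simp_all add: bnd_def)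
  have dec1: "h1 = (\<Sum>D\<in>{-N..N}. proj (D - w1) h1)" by (rule decomp) (use b in \<open>auto simp: N_def\<close>)
  have dec2: "h2 = (\<Sum>D\<in>{-N..N}. proj (D - w2) h2)" by (rule decomp) (use b in \<open>auto simp: N_def\<close>)
  have dec3: "h3 = (\<Sum>D\<in>{-N..N}. proj (D - w3) h3)" by (rule decomp) (use b in \<open>auto simp: N_def\<close>)
  have "\<exists>F g. proj (D - w1) h1 = dX F + g * f1 \<and> proj (D - w2) h2 = dY F + g * f2 \<and> proj (D - w3) h3 = dZ F + g * f3" for D :: int
  proof -
    define p1 where "p1 = proj (D - w1) h1"
    define p2 where "p2 = proj (D - w2) h2"
    define p3 where "p3 = proj (D - w3) h3"
    have i: "D + d - int w1 - int w2 - int w3 - (d - int w1) = D - int w2 - int w3"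
      "D + d - int w1 - int w2 - int w3 - (d - int w2) = D - int w1 - int w3"
      "D + d - int w1 - int w2 - int w3 - (d - int w3) = D - int w1 - int w2"
      "D - int w2 - int w3 + int w2 = D - int w3" "D - int w2 - int w3 + int w3 = D - int w2"
      "D - int w1 - int w3 + int w1 = D - int w3" "D - int w1 - int w3 + int w3 = D - int w1"
      "D - int w1 - int w2 + int w1 = D - int w2" "D - int w1 - int w2 + int w2 = D - int w1"
      by simp_all
    have "proj (D + d - int w1 - int w2 - int w3) ((dY h3 - dZ h2) * f1 + (dZ h1 - dX h3) * f2 + (dX h2 - dY h1) * f3)
       = (dY p3 - dZ p2) * f1 + (dZ p1 - dX p3) * f2 + (dX p2 - dY p1) * f3"
      unfolding p1_def p2_def p3_def
      by (simp only: proj_add proj_mult[OF hf1] proj_mult[OF hf2] proj_mult[OF hf3] i proj_diff proj_dX proj_dY proj_dZ)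
    then have c: "(dY p3 - dZ p2) * f1 + (dZ p1 - dX p3) * f2 + (dX p2 - dY p1) * f3 = 0"
      using cond by (simp add: proj_0)
    show ?thesis using main_hom[OF hom_proj hom_proj hom_proj c[unfolded p1_def p2_def p3_def]] by blast
  qed
  then have "\<forall>D::int. \<exists>Fg. proj (D - w1) h1 = dX (fst Fg) + snd Fg * f1 \<and> proj (D - w2) h2 = dY (fst Fg) + snd Fg * f2
      \<and> proj (D - w3) h3 = dZ (fst Fg) + snd Fg * f3" by simp
  then obtain Fg where Fg: "\<And>D::int. proj (D - w1) h1 = dX (fst (Fg D)) + snd (Fg D) * f1 \<and> proj (D - w2) h2 = dY (fst (Fg D)) + snd (Fg D) * f2
      \<and> proj (D - w3) h3 = dZ (fst (Fg D)) + snd (Fg D) * f3" by metis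
  define F where "F = (\<Sum>D\<in>{-N..N}. fst (Fg D))"
  define g where "g = (\<Sum>D\<in>{-N..N}. snd (Fg D))"
  have "h1 = dX F + g * f1" by (subst dec1) (simp add: Fg F_def g_def dX_sum sum.distrib sum_distrib_right)
  moreover have "h2 = dY F + g * f2" by (subst dec2) (simp add: Fg F_def g_def dY_sum sum.distrib sum_distrib_right)
  moreover have "h3 = dZ F + g * f3" by (subst dec3) (simp add: Fg F_def g_def dZ_sum sum.distrib sum_distrib_right)
  ultimately show ?thesis by blast
qed

end

theorem mainTheorem2:
  fixes w1 w2 w3 :: nat
    and phi :: "'a::field_char_0 mpoly3"
    and h :: "'a vfield"
  assumes "w1 > 0" and "w2 > 0" and "w3 > 0"
    and "gcd w1 (gcd w2 w3) = 1"
    and "whis w1 w2 w3 phi"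
    and "vdot (curl h) (grad phi) = 0"
  shows "\<exists>f g. h = vadd (grad f) (vscale g (grad phi))"
proof -
  interpret W: wts w1 w2 w3 by unfold_locales (use assms in auto)
  obtain d0 where wh: "weight_homogeneous w1 w2 w3 d0 phi" and iso: "isolated_sing phi"
    using assms(5) unfolding whis_def by blast
  have hphi: "W.hom (int d0) phi"
    using wh unfolding weight_homogeneous_def W.hom_def W.wt_def by simp
  have J: "jac_ideal phi = W.Jf (dX phi) (dY phi) (dZ phi)"
    unfolding jac_ideal_def W.Jf_def by simp
  obtain S where S: "finite S" "\<forall>p. \<exists>k. p - (\<Sum>s\<in>S. const3 (k s) * s) \<in> W.Jf (dX phi) (dY phi) (dZ phi)"
    using iso unfolding isolated_sing_def J by blast
  have h1: "W.hom (int d0 - w1) (dX phi)" by (rule W.hom_dX[OF hphi])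
  have h2: "W.hom (int d0 - w2) (dY phi)" by (rule W.hom_dY[OF hphi])
  have h3: "W.hom (int d0 - w3) (dZ phi)" by (rule W.hom_dZ[OF hphi])
  obtain a where a: "xp a \<in> W.Jf (dX phi) (dY phi) (dZ phi)"
    using W.mon_in_Jf[OF S h1 h2 h3 assms(1) W.hom_xp] by blast
  obtain b where b: "yp b \<in> W.Jf (dX phi) (dY phi) (dZ phi)"
    using W.mon_in_Jf[OF S h1 h2 h3 assms(2) W.hom_yp] by blast
  obtain c where c: "zp c \<in> W.Jf (dX phi) (dY phi) (dZ phi)"
    using W.mon_in_Jf[OF S h1 h2 h3 assms(3) W.hom_zp] by blast
  obtain n1 n2 n3 where n: "xp a = n1 * dX phi + n2 * dY phi + n3 * dZ phi" using a unfolding W.Jf_def by blast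
  obtain m1 m2 m3 where m: "yp b = m1 * dX phi + m2 * dY phi + m3 * dZ phi" using b unfolding W.Jf_def by blast
  obtain l1 l2 l3 where l: "zp c = l1 * dX phi + l2 * dY phi + l3 * dZ phi" using c unfolding W.Jf_def by blast
  have dpos: "int d0 > 0"
  proof (rule ccontr)
    assume "\<not> int d0 > 0"
    then have "int d0 - w1 < 0" "int d0 - w2 < 0" "int d0 - w3 < 0" using assms(1-3) by simp_all
    then have "dX phi = 0" "dY phi = 0" "dZ phi = 0" using W.hom_neg[OF h1] W.hom_neg[OF h2] W.hom_neg[OF h3] by blast+
    then have "xp a = (0 :: 'a mpoly3)" using n by simp
    moreover have "coeff3 (xp a :: 'a mpoly3) a 0 0 = 1" by (simp add: coeff3_xp)
    ultimately show False by simp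
  qed
  interpret M: mainloc w1 w2 w3 phi "int d0" a b c l1 l2 l3 m1 m2 m3 n1 n2 n3
    by unfold_locales (use hphi dpos l m n in auto)
  obtain h1 h2 h3 where h: "h = (h1, h2, h3)" by (cases h)
  have cond: "(dY h3 - dZ h2) * dX phi + (dZ h1 - dX h3) * dY phi + (dX h2 - dY h1) * dZ phi = 0"
    using assms(6) by (simp add: h vdot_def curl_def grad_def)
  obtain F g where "h1 = dX F + g * dX phi" "h2 = dY F + g * dY phi" "h3 = dZ F + g * dZ phi"
    using M.main_general[OF cond] by blast
  then have "h = vadd (grad F) (vscale g (grad phi))"
    by (simp add: h vadd_def grad_def vscale_def)
  then show ?thesis by blast
qed



end
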